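(* Let $N\geq2$, $\gamma\geq0$, $\alpha\in(0,1)$, $p>1$ with $2<p+1-\frac{2\gamma}{N-2\alpha}<\frac{2N}{N-2\alpha}$, and $(a,b)\in(0,\infty)\times[0,\infty)$. Then $$m_{a,b}=\inf\{H(\phi):\ 0\neq\phi\in H^\alpha_{rd},\ K(\phi)\leq0\}.$$
   Context: $H^\alpha_{rd}$ is the space of radial functions in the fractional Sobolev space $H^\alpha(\mathbb{R}^N)$ with norm $\|u\|_{H^\alpha}=(\|u\|_{L^2}^2+\|(-\Delta)^{\alpha/2}u\|_{L^2}^2)^{1/2}$. $S(\phi):=\frac12\|\phi\|_{H^\alpha}^2-\frac{1}{p+1}\int|x|^\gamma|\phi|^{p+1}dx$; for $\lambda>0$, $\phi^\lambda:=\lambda^a\phi(\cdot/\lambda^b)$; $K(\phi):=\partial_\lambda(S(\phi^\lambda))|_{\lambda=1}$; $H(\phi):=S(\phi)-\frac{1}{2a+Nb}K(\phi)$; $m_{a,b}:=\inf\{S(\phi):0\neq\phi\in H^\alpha_{rd},\ K(\phi)=0\}$. *)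

theory Defs
  imports "HOL-Analysis.Analysis"
begin

text \<open>Functions u : R^N -> C, with R^N an abstract euclidean space 'a, N = DIM('a).\<close>

definition frac_const :: "nat \<Rightarrow> real \<Rightarrow> real" where
  "frac_const N s = s * (2 powr (2 * s)) * Gamma ((real N + 2 * s)/2) / (pi powr (real N / 2) * Gamma (1 - s))"

definition L2_sq :: "('a::euclidean_space \<Rightarrow> complex) \<Rightarrow> ennreal" where
  "L2_sq u = (\<integral>\<^sup>+ x. ennreal ((cmod (u x))\<^sup>2) \<partial>lborel)"

definition gagliardo_sq :: "real \<Rightarrow> ('a::euclidean_space \<Rightarrow> complex) \<Rightarrow> ennreal" where
  "gagliardo_sq \<alpha> u = (\<integral>\<^sup>+ x. \<integral>\<^sup>+ y.
      ennreal ((cmod (u x - u y))\<^sup>2 / norm (x - y) powr (real DIM('a) + 2 * \<alpha>)) \<partial>lborel \<partial>lborel)"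

definition in_H :: "real \<Rightarrow> ('a::euclidean_space \<Rightarrow> complex) \<Rightarrow> bool" where
  "in_H \<alpha> u \<longleftrightarrow> u \<in> borel_measurable lborel \<and> L2_sq u < \<infinity> \<and> gagliardo_sq \<alpha> u < \<infinity>"

definition radial :: "('a::euclidean_space \<Rightarrow> complex) \<Rightarrow> bool" where
  "radial u \<longleftrightarrow> (\<forall>x y. norm x = norm y \<longrightarrow> u x = u y)"

definition in_H_rd :: "real \<Rightarrow> ('a::euclidean_space \<Rightarrow> complex) \<Rightarrow> bool" where
  "in_H_rd \<alpha> u \<longleftrightarrow> in_H \<alpha> u \<and> radial u"

text \<open>||(-Delta)^(alpha/2) u||_2^2 = C(N,alpha)/2 * Gagliardo seminorm squared.\<close>
definition frac_lap_sq :: "real \<Rightarrow> ('a::euclidean_space \<Rightarrow> complex) \<Rightarrow> real" where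
  "frac_lap_sq \<alpha> u = frac_const DIM('a) \<alpha> / 2 * enn2real (gagliardo_sq \<alpha> u)"

definition H_norm_sq :: "real \<Rightarrow> ('a::euclidean_space \<Rightarrow> complex) \<Rightarrow> real" where
  "H_norm_sq \<alpha> u = enn2real (L2_sq u) + frac_lap_sq \<alpha> u"

definition action :: "real \<Rightarrow> real \<Rightarrow> real \<Rightarrow> ('a::euclidean_space \<Rightarrow> complex) \<Rightarrow> real" where
  "action \<alpha> \<gamma> p u = H_norm_sq \<alpha> u / 2
     - 1 / (p + 1) * (\<integral>x. norm x powr \<gamma> * cmod (u x) powr (p + 1) \<partial>lborel)"

definition rescale :: "real \<Rightarrow> real \<Rightarrow> real \<Rightarrow> ('a::euclidean_space \<Rightarrow> complex) \<Rightarrow> ('a \<Rightarrow> complex)" where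
  "rescale a b t u = (\<lambda>x. complex_of_real (t powr a) * u ((1 / t powr b) *\<^sub>R x))"

definition Kfun :: "real \<Rightarrow> real \<Rightarrow> real \<Rightarrow> real \<Rightarrow> real \<Rightarrow> ('a::euclidean_space \<Rightarrow> complex) \<Rightarrow> real" where
  "Kfun \<alpha> \<gamma> p a b u = deriv (\<lambda>t. action \<alpha> \<gamma> p (rescale a b t u)) 1"

definition Hfun :: "real \<Rightarrow> real \<Rightarrow> real \<Rightarrow> real \<Rightarrow> real \<Rightarrow> ('a::euclidean_space \<Rightarrow> complex) \<Rightarrow> real" where
  "Hfun \<alpha> \<gamma> p a b u = action \<alpha> \<gamma> p u - 1 / (2 * a + real DIM('a) * b) * Kfun \<alpha> \<gamma> p a b u"

definition nonzero :: "('a::euclidean_space \<Rightarrow> complex) \<Rightarrow> bool" where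
  "nonzero u \<longleftrightarrow> \<not> (AE x in lborel. u x = 0)"

definition m_ab :: "'a::euclidean_space itself \<Rightarrow> real \<Rightarrow> real \<Rightarrow> real \<Rightarrow> real \<Rightarrow> real \<Rightarrow> real" where
  "m_ab _ \<alpha> \<gamma> p a b = Inf {action \<alpha> \<gamma> p u | u :: 'a \<Rightarrow> complex.
      in_H_rd \<alpha> u \<and> nonzero u \<and> Kfun \<alpha> \<gamma> p a b u = 0}"

end

theory Submission
  imports Defs
begin
lemma nn_scale:
  fixes g :: "'a::euclidean_space \<Rightarrow> ennreal"
  assumes g: "g \<in> borel_measurable borel" and c: "c > 0"
  shows "(\<integral>\<^sup>+ x. g ((1/c) *\<^sub>R x) \<partial>lborel) = ennreal (c ^ DIM('a)) * (\<integral>\<^sup>+ x. g x \<partial>lborel)"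
proof -
  have "(\<integral>\<^sup>+ x. g x \<partial>lborel) = (\<integral>\<^sup>+ x. g x \<partial>density (distr lborel borel (\<lambda>x. 0 + (1/c) *\<^sub>R x)) (\<lambda>_. \<bar>1/c\<bar>^DIM('a)))"
    using lborel_affine[of "1/c" "0::'a"] c by simp
  also have "\<dots> = (\<integral>\<^sup>+ x. ennreal ((1/c)^DIM('a)) * g ((1/c) *\<^sub>R x) \<partial>lborel)"
    using g c by (simp add: nn_integral_density nn_integral_distr)
  also have "\<dots> = ennreal ((1/c)^DIM('a)) * (\<integral>\<^sup>+ x. g ((1/c) *\<^sub>R x) \<partial>lborel)"
    using g by (intro nn_integral_cmult measurable_compose[OF _ g]) simp
  finally have "(\<integral>\<^sup>+ x. g x \<partial>lborel) = ennreal ((1/c)^DIM('a)) * (\<integral>\<^sup>+ x. g ((1/c) *\<^sub>R x) \<partial>lborel)" .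
  hence "ennreal (c ^ DIM('a)) * (\<integral>\<^sup>+ x. g x \<partial>lborel) = ennreal (c ^ DIM('a)) * ennreal ((1/c)^DIM('a)) * (\<integral>\<^sup>+ x. g ((1/c) *\<^sub>R x) \<partial>lborel)"
    by (simp add: mult.assoc)
  also have "ennreal (c ^ DIM('a)) * ennreal ((1/c)^DIM('a)) = 1"
    using c by (simp add: ennreal_mult''[symmetric] power_mult_distrib[symmetric])
  finally show ?thesis by simp
qed

lemma rescale_meas:
  assumes "u \<in> borel_measurable lborel"
  shows "rescale a b t u \<in> borel_measurable lborel"
  unfolding rescale_def using assms by (intro borel_measurable_times measurable_compose[OF _ assms[unfolded measurable_lborel1]]) (auto simp: measurable_lborel1)

lemma L2_rescale:
  fixes u :: "'a::euclidean_space \<Rightarrow> complex"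
  assumes u: "u \<in> borel_measurable lborel" and t: "t > 0"
  shows "L2_sq (rescale a b t u) = ennreal (t powr (2*a + real DIM('a) * b)) * L2_sq u"
proof -
  define s where "s = t powr b"
  have s: "s > 0" using t by (simp add: s_def)
  have um[measurable]: "u \<in> borel_measurable borel" using u by (simp add: measurable_lborel1)
  have [measurable]: "(\<lambda>x. u ((1/s) *\<^sub>R x)) \<in> borel_measurable borel"
    by (rule measurable_compose[OF _ um]) simp
  have pw: "\<And>x. (cmod (rescale a b t u x))\<^sup>2 = (t powr a)\<^sup>2 * (cmod (u ((1/s) *\<^sub>R x)))\<^sup>2"
    by (simp add: rescale_def s_def norm_mult power_mult_distrib)
  have "L2_sq (rescale a b t u) = (\<integral>\<^sup>+ x. ennreal ((t powr a)\<^sup>2) * ennreal ((cmod (u ((1/s) *\<^sub>R x)))\<^sup>2) \<partial>lborel)"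
    unfolding L2_sq_def pw by (simp add: ennreal_mult)
  also have "\<dots> = ennreal ((t powr a)\<^sup>2) * (\<integral>\<^sup>+ x. ennreal ((cmod (u ((1/s) *\<^sub>R x)))\<^sup>2) \<partial>lborel)"
    using um by (intro nn_integral_cmult) measurable
  also have "(\<integral>\<^sup>+ x. ennreal ((cmod (u ((1/s) *\<^sub>R x)))\<^sup>2) \<partial>lborel) = ennreal (s ^ DIM('a)) * L2_sq u"
    unfolding L2_sq_def using um s by (intro nn_scale[where g="\<lambda>x. ennreal ((cmod (u x))\<^sup>2)"]) measurable
  also have "ennreal ((t powr a)\<^sup>2) * (ennreal (s ^ DIM('a)) * L2_sq u) = ennreal ((t powr a)\<^sup>2 * s ^ DIM('a)) * L2_sq u"
    using s by (subst ennreal_mult) (auto simp: mult.assoc)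
  also have "(t powr a)\<^sup>2 * s ^ DIM('a) = t powr (2*a + real DIM('a) * b)"
    using t unfolding s_def
    by (simp add: powr_realpow[symmetric] powr_powr powr_add[symmetric] algebra_simps)
  finally show ?thesis .
qed


definition Wint :: "real \<Rightarrow> real \<Rightarrow> ('a::euclidean_space \<Rightarrow> complex) \<Rightarrow> real" where
  "Wint \<gamma> p u = (\<integral>x. norm x powr \<gamma> * cmod (u x) powr (p + 1) \<partial>lborel)"

lemma W_rescale:
  fixes u :: "'a::euclidean_space \<Rightarrow> complex"
  assumes u: "u \<in> borel_measurable lborel" and t: "t > 0"
  shows "Wint \<gamma> p (rescale a b t u) = t powr ((p+1)*a + (real DIM('a) + \<gamma>) * b) * Wint \<gamma> p u"
proof -
  define s where "s = t powr b"
  have s: "s > 0" using t by (simp add: s_def)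
  have um[measurable]: "u \<in> borel_measurable borel" using u by (simp add: measurable_lborel1)
  have [measurable]: "(\<lambda>x. u ((1/s) *\<^sub>R x)) \<in> borel_measurable borel"
    by (rule measurable_compose[OF _ um]) simp
  define F where "F x = norm x powr \<gamma> * cmod (u x) powr (p + 1)" for x :: 'a
  have Fm[measurable]: "F \<in> borel_measurable borel" unfolding F_def by measurable
  have [measurable]: "(\<lambda>x. F ((1/s) *\<^sub>R x)) \<in> borel_measurable borel"
    by (rule measurable_compose[OF _ Fm]) simp
  define C where "C = s powr \<gamma> * (t powr a) powr (p+1)"
  have C: "C \<ge> 0" by (simp add: C_def)
  have pw: "norm x powr \<gamma> * cmod (rescale a b t u x) powr (p + 1) = C * F ((1/s) *\<^sub>R x)" for x
  proof -
    have "norm x powr \<gamma> = s powr \<gamma> * norm ((1/s) *\<^sub>R x) powr \<gamma>"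
      using s by (simp add: powr_divide)
    moreover have "cmod (rescale a b t u x) powr (p+1) = (t powr a) powr (p+1) * cmod (u ((1/s) *\<^sub>R x)) powr (p+1)"
      by (simp add: rescale_def s_def norm_mult powr_mult)
    ultimately show ?thesis by (simp add: C_def F_def)
  qed
  have "Wint \<gamma> p (rescale a b t u) = enn2real (\<integral>\<^sup>+ x. ennreal (C * F ((1/s) *\<^sub>R x)) \<partial>lborel)"
    unfolding Wint_def pw by (subst integral_eq_nn_integral) (auto simp: F_def C_def)
  also have "(\<integral>\<^sup>+ x. ennreal (C * F ((1/s) *\<^sub>R x)) \<partial>lborel) = ennreal C * (\<integral>\<^sup>+ x. ennreal (F ((1/s) *\<^sub>R x)) \<partial>lborel)"
    using C by (subst ennreal_mult) (auto simp: F_def intro!: nn_integral_cmult)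
  also have "(\<integral>\<^sup>+ x. ennreal (F ((1/s) *\<^sub>R x)) \<partial>lborel) = ennreal (s ^ DIM('a)) * (\<integral>\<^sup>+ x. ennreal (F x) \<partial>lborel)"
    using s by (intro nn_scale[where g="\<lambda>x. ennreal (F x)"]) measurable
  also have "enn2real (ennreal C * (ennreal (s ^ DIM('a)) * (\<integral>\<^sup>+ x. ennreal (F x) \<partial>lborel)))
     = C * s ^ DIM('a) * enn2real (\<integral>\<^sup>+ x. ennreal (F x) \<partial>lborel)"
    using C s by (simp add: enn2real_mult)
  also have "enn2real (\<integral>\<^sup>+ x. ennreal (F x) \<partial>lborel) = Wint \<gamma> p u"
    unfolding Wint_def F_def by (subst integral_eq_nn_integral) auto
  also have "C * s ^ DIM('a) = t powr ((p+1)*a + (real DIM('a) + \<gamma>) * b)"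
    using t unfolding C_def s_def
    by (simp add: powr_realpow[symmetric] powr_powr powr_add[symmetric] algebra_simps)
  finally show ?thesis .
qed


lemma G_rescale:
  fixes u :: "'a::euclidean_space \<Rightarrow> complex"
  assumes u: "u \<in> borel_measurable lborel" and t: "t > 0"
  shows "gagliardo_sq \<alpha> (rescale a b t u) = ennreal (t powr (2*a + (real DIM('a) - 2*\<alpha>) * b)) * gagliardo_sq \<alpha> u"
proof -
  define s where "s = t powr b"
  have s: "s > 0" using t by (simp add: s_def)
  define q where "q = real DIM('a) + 2 * \<alpha>"
  have um[measurable]: "u \<in> borel_measurable borel" using u by (simp add: measurable_lborel1)
  define h where "h x y = ennreal ((cmod (u x - u y))\<^sup>2 / norm (x - y) powr q)" for x y :: 'a
  have hm[measurable]: "(\<lambda>(x,y). h x y) \<in> borel_measurable (lborel \<Otimes>\<^sub>M lborel)"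
    unfolding h_def by measurable
  have hm1[measurable]: "h x \<in> borel_measurable borel" for x
    using measurable_Pair2[OF hm, of x] by simp
  have hm2[measurable]: "(\<lambda>x. \<integral>\<^sup>+ y. h x y \<partial>lborel) \<in> borel_measurable borel"
    using hm by measurable
  define C where "C = (t powr a)\<^sup>2 / s powr q"
  have C: "C \<ge> 0" by (simp add: C_def)
  have pw: "ennreal ((cmod (rescale a b t u x - rescale a b t u y))\<^sup>2 / norm (x - y) powr q)
     = ennreal C * h ((1/s) *\<^sub>R x) ((1/s) *\<^sub>R y)" for x y
  proof -
    have e: "(1/s) *\<^sub>R x - (1/s) *\<^sub>R y = (1/s) *\<^sub>R (x - y)" by (simp add: scaleR_diff_right)
    have n: "norm (x - y) powr q = s powr q * norm ((1/s) *\<^sub>R x - (1/s) *\<^sub>R y) powr q"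
      using s unfolding e by (simp add: powr_divide)
    have c: "(cmod (rescale a b t u x - rescale a b t u y))\<^sup>2 = (t powr a)\<^sup>2 * (cmod (u ((1/s) *\<^sub>R x) - u ((1/s) *\<^sub>R y)))\<^sup>2"
      by (simp add: rescale_def s_def norm_mult power_mult_distrib right_diff_distrib[symmetric])
    show ?thesis unfolding h_def n c using s C
      by (subst ennreal_mult[symmetric]) (auto simp: C_def)
  qed
  have inner: "(\<integral>\<^sup>+ y. ennreal C * h ((1/s) *\<^sub>R x) ((1/s) *\<^sub>R y) \<partial>lborel)
      = ennreal C * (ennreal (s ^ DIM('a)) * (\<integral>\<^sup>+ y. h ((1/s) *\<^sub>R x) y \<partial>lborel))" for x
  proof -
    have [measurable]: "(\<lambda>y. h ((1/s) *\<^sub>R x) ((1/s) *\<^sub>R y)) \<in> borel_measurable borel"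
      by (rule measurable_compose[OF _ hm1]) simp
    have "(\<integral>\<^sup>+ y. ennreal C * h ((1/s) *\<^sub>R x) ((1/s) *\<^sub>R y) \<partial>lborel)
       = ennreal C * (\<integral>\<^sup>+ y. h ((1/s) *\<^sub>R x) ((1/s) *\<^sub>R y) \<partial>lborel)"
      by (intro nn_integral_cmult) measurable
    also have "(\<integral>\<^sup>+ y. h ((1/s) *\<^sub>R x) ((1/s) *\<^sub>R y) \<partial>lborel) = ennreal (s ^ DIM('a)) * (\<integral>\<^sup>+ y. h ((1/s) *\<^sub>R x) y \<partial>lborel)"
      using s by (intro nn_scale) measurable
    finally show ?thesis .
  qed
  have [measurable]: "(\<lambda>x. \<integral>\<^sup>+ y. h ((1/s) *\<^sub>R x) y \<partial>lborel) \<in> borel_measurable borel"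
    by (rule measurable_compose[OF _ hm2]) simp
  have "gagliardo_sq \<alpha> (rescale a b t u) = (\<integral>\<^sup>+ x. ennreal C * (ennreal (s ^ DIM('a)) * (\<integral>\<^sup>+ y. h ((1/s) *\<^sub>R x) y \<partial>lborel)) \<partial>lborel)"
    unfolding gagliardo_sq_def q_def[symmetric] pw inner ..
  also have "\<dots> = ennreal C * (ennreal (s ^ DIM('a)) * (\<integral>\<^sup>+ x. (\<integral>\<^sup>+ y. h ((1/s) *\<^sub>R x) y \<partial>lborel) \<partial>lborel))"
    by (subst nn_integral_cmult, measurable)+
  also have "(\<integral>\<^sup>+ x. (\<integral>\<^sup>+ y. h ((1/s) *\<^sub>R x) y \<partial>lborel) \<partial>lborel) = ennreal (s ^ DIM('a)) * gagliardo_sq \<alpha> u"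
    unfolding gagliardo_sq_def q_def[symmetric] h_def[symmetric] using s
    by (intro nn_scale[where g="\<lambda>x. \<integral>\<^sup>+ y. h x y \<partial>lborel"]) measurable
  also have "ennreal C * (ennreal (s ^ DIM('a)) * (ennreal (s ^ DIM('a)) * gagliardo_sq \<alpha> u))
      = ennreal (C * s ^ DIM('a) * s ^ DIM('a)) * gagliardo_sq \<alpha> u"
    using C s by (simp add: ennreal_mult mult.assoc)
  also have "C * s ^ DIM('a) * s ^ DIM('a) = t powr (2*a + (real DIM('a) - 2*\<alpha>) * b)"
    using t unfolding C_def s_def q_def
    by (simp add: powr_realpow[symmetric] powr_powr powr_add[symmetric] powr_diff[symmetric] algebra_simps)
  finally show ?thesis .
qed


lemma action_eq:
  "action \<alpha> \<gamma> p (v::'a::euclidean_space \<Rightarrow> complex) = (enn2real (L2_sq v) + frac_const DIM('a) \<alpha> / 2 * enn2real (gagliardo_sq \<alpha> v)) / 2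
     - 1/(p+1) * Wint \<gamma> p v"
  unfolding action_def H_norm_sq_def frac_lap_sq_def Wint_def ..

lemma action_rescale:
  fixes v :: "'a::euclidean_space \<Rightarrow> complex"
  assumes v: "v \<in> borel_measurable lborel" and t: "t > 0"
  shows "action \<alpha> \<gamma> p (rescale a b t v) =
     (t powr (2*a + real DIM('a) * b) * enn2real (L2_sq v)
      + frac_const DIM('a) \<alpha> / 2 * (t powr (2*a + (real DIM('a) - 2*\<alpha>) * b) * enn2real (gagliardo_sq \<alpha> v))) / 2
     - 1/(p+1) * (t powr ((p+1)*a + (real DIM('a) + \<gamma>) * b) * Wint \<gamma> p v)"
  unfolding action_eq L2_rescale[OF v t] G_rescale[OF v t] W_rescale[OF v t]
  by (simp add: enn2real_mult)

lemma Kfun_eq: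
  fixes v :: "'a::euclidean_space \<Rightarrow> complex"
  assumes v: "v \<in> borel_measurable lborel"
  shows "Kfun \<alpha> \<gamma> p a b v =
     ((2*a + real DIM('a) * b) * enn2real (L2_sq v)
      + frac_const DIM('a) \<alpha> / 2 * ((2*a + (real DIM('a) - 2*\<alpha>) * b) * enn2real (gagliardo_sq \<alpha> v))) / 2
     - 1/(p+1) * (((p+1)*a + (real DIM('a) + \<gamma>) * b) * Wint \<gamma> p v)"
proof -
  define e1 where "e1 = 2*a + real DIM('a) * b"
  define e2 where "e2 = 2*a + (real DIM('a) - 2*\<alpha>) * b"
  define e3 where "e3 = (p+1)*a + (real DIM('a) + \<gamma>) * b"
  define A where "A = enn2real (L2_sq v)"
  define G where "G = enn2real (gagliardo_sq \<alpha> v)"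
  define W where "W = Wint \<gamma> p v"
  define Kc where "Kc = frac_const DIM('a) \<alpha> / 2"
  define f where "f t = (t powr e1 * A + Kc * (t powr e2 * G)) / 2 - 1/(p+1) * (t powr e3 * W)" for t :: real
  have ev: "eventually (\<lambda>t. action \<alpha> \<gamma> p (rescale a b t v) = f t) (nhds 1)"
  proof -
    have "eventually (\<lambda>t. t \<in> {0<..}) (nhds (1::real))"
      by (intro eventually_nhds_in_open) auto
    thus ?thesis
      by eventually_elim (simp add: action_rescale[OF v] f_def e1_def e2_def e3_def A_def G_def W_def Kc_def)
  qed
  have p1: "((\<lambda>t. t powr e) has_real_derivative e) (at 1)" for e
    using has_real_derivative_powr[of 1 e] by simp
  have d: "(f has_real_derivative ((e1 * A + Kc * (e2 * G)) / 2 - 1/(p+1) * (e3 * W))) (at 1)"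
    unfolding f_def
    by (rule DERIV_diff[OF DERIV_cdivide[OF DERIV_add[OF DERIV_cmult_right[OF p1] DERIV_cmult[OF DERIV_cmult_right[OF p1]]]] DERIV_cmult[OF DERIV_cmult_right[OF p1]]])
  have "((\<lambda>t. action \<alpha> \<gamma> p (rescale a b t v)) has_real_derivative ((e1 * A + Kc * (e2 * G)) / 2 - 1/(p+1) * (e3 * W))) (at 1)"
    using d by (subst DERIV_cong_ev[OF refl ev refl])
  hence "Kfun \<alpha> \<gamma> p a b v = (e1 * A + Kc * (e2 * G)) / 2 - 1/(p+1) * (e3 * W)"
    unfolding Kfun_def by (rule DERIV_imp_deriv)
  thus ?thesis by (simp add: e1_def e2_def e3_def A_def G_def W_def Kc_def)
qed


lemma nonzero_iff_L2:
  fixes v :: "'a::euclidean_space \<Rightarrow> complex"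
  assumes v: "v \<in> borel_measurable lborel"
  shows "nonzero v \<longleftrightarrow> L2_sq v \<noteq> 0"
proof -
  have [measurable]: "v \<in> borel_measurable borel" using v by (simp add: measurable_lborel1)
  have "L2_sq v = 0 \<longleftrightarrow> (AE x in lborel. ennreal ((cmod (v x))\<^sup>2) = 0)"
    unfolding L2_sq_def by (rule nn_integral_0_iff_AE) measurable
  also have "\<dots> \<longleftrightarrow> (AE x in lborel. v x = 0)"
    by (simp add: ennreal_eq_0_iff)
  finally show ?thesis unfolding nonzero_def by blast
qed

lemma P_rescale:
  fixes v :: "'a::euclidean_space \<Rightarrow> complex"
  assumes P: "in_H_rd \<alpha> v" "nonzero v" and t: "t > 0"
  shows "in_H_rd \<alpha> (rescale a b t v) \<and> nonzero (rescale a b t v)"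
proof -
  have v: "v \<in> borel_measurable lborel" using P by (simp add: in_H_rd_def in_H_def)
  have m: "rescale a b t v \<in> borel_measurable lborel" by (rule rescale_meas[OF v])
  have L: "L2_sq v < \<infinity>" "gagliardo_sq \<alpha> v < \<infinity>" using P by (auto simp: in_H_rd_def in_H_def)
  have "L2_sq v \<noteq> 0" using P v nonzero_iff_L2 by blast
  hence nz: "nonzero (rescale a b t v)"
    using t by (simp add: nonzero_iff_L2[OF m] L2_rescale[OF v t])
  have h: "in_H \<alpha> (rescale a b t v)"
    unfolding in_H_def using m L t
    by (simp add: L2_rescale[OF v t] G_rescale[OF v t] ennreal_mult_less_top)
  have r: "radial (rescale a b t v)"
    using P unfolding in_H_rd_def radial_def rescale_def by simp
  show ?thesis using nz h r by (simp add: in_H_rd_def)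
qed


theorem lemma7p4:
  fixes \<alpha> \<gamma> p a b :: real
  assumes "DIM('a::euclidean_space) \<ge> 2"
    and "\<gamma> \<ge> 0" and "0 < \<alpha>" and "\<alpha> < 1" and "p > 1"
    and "2 < p + 1 - 2 * \<gamma> / (real DIM('a) - 2 * \<alpha>)"
    and "p + 1 - 2 * \<gamma> / (real DIM('a) - 2 * \<alpha>) < 2 * real DIM('a) / (real DIM('a) - 2 * \<alpha>)"
    and "a > 0" and "b \<ge> 0"
  shows "m_ab TYPE('a) \<alpha> \<gamma> p a b =
         Inf {Hfun \<alpha> \<gamma> p a b u | u :: 'a \<Rightarrow> complex.
                in_H_rd \<alpha> u \<and> nonzero u \<and> Kfun \<alpha> \<gamma> p a b u \<le> 0}"
proof -
  note D2 = assms(1) and g0 = assms(2) and al0 = assms(3) and al1 = assms(4) and p1 = assms(5)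
    and a0 = assms(8) and b0 = assms(9)
  define e1 where "e1 = 2*a + real DIM('a) * b"
  define e2 where "e2 = 2*a + (real DIM('a) - 2*\<alpha>) * b"
  define e3 where "e3 = (p+1)*a + (real DIM('a) + \<gamma>) * b"
  define Kc where "Kc = frac_const DIM('a) \<alpha> / 2"
  define A where "A v = enn2real (L2_sq v)" for v :: "'a \<Rightarrow> complex"
  define G where "G v = enn2real (gagliardo_sq \<alpha> v)" for v :: "'a \<Rightarrow> complex"
  define W where "W v = Wint \<gamma> p v" for v :: "'a \<Rightarrow> complex"
  define P where "P v \<longleftrightarrow> in_H_rd \<alpha> v \<and> nonzero v" for v :: "'a \<Rightarrow> complex"
  have De: "real DIM('a) \<ge> 2" using D2 by simp
  have e1: "e1 > 0" unfolding e1_def using a0 b0 by (simp add: add_pos_nonneg)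
  have e2: "e2 \<ge> 0" unfolding e2_def using a0 b0 De al1 by (intro add_nonneg_nonneg mult_nonneg_nonneg) auto
  have e12: "e1 - e2 \<ge> 0" unfolding e1_def e2_def using al0 b0 by (simp add: algebra_simps)
  have e31: "e3 - e1 > 0"
  proof -
    have "e3 - e1 = (p - 1) * a + \<gamma> * b" unfolding e1_def e3_def by (simp add: algebra_simps)
    moreover have "(p - 1) * a > 0" using p1 a0 by simp
    moreover have "\<gamma> * b \<ge> 0" using g0 b0 by simp
    ultimately show ?thesis by linarith
  qed
  have Kc: "Kc \<ge> 0" unfolding Kc_def frac_const_def using al0 al1
    by (intro divide_nonneg_nonneg mult_nonneg_nonneg) (auto intro!: Gamma_real_nonneg add_pos_nonneg)
  have p1': "p + 1 > 0" using p1 by simp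
  have meas: "P v \<Longrightarrow> v \<in> borel_measurable lborel" for v by (simp add: P_def in_H_rd_def in_H_def)
  have Wnn: "W v \<ge> 0" for v unfolding W_def Wint_def by (rule Bochner_Integration.integral_nonneg) simp
  have Gnn: "G v \<ge> 0" for v unfolding G_def by simp
  have Apos: "P v \<Longrightarrow> A v > 0" for v
  proof -
    assume Pv: "P v"
    hence "L2_sq v \<noteq> 0" using nonzero_iff_L2[OF meas[OF Pv]] by (simp add: P_def)
    moreover have "L2_sq v < \<infinity>" using Pv by (simp add: P_def in_H_rd_def in_H_def)
    ultimately show ?thesis unfolding A_def by (simp add: enn2real_positive_iff zero_less_iff_neq_zero)
  qed
  have act: "action \<alpha> \<gamma> p v = (A v + Kc * G v)/2 - 1/(p+1) * W v" for v
    unfolding action_eq A_def G_def W_def Kc_def ..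
  have Kf: "P v \<Longrightarrow> Kfun \<alpha> \<gamma> p a b v = (e1 * A v + Kc * (e2 * G v))/2 - 1/(p+1) * (e3 * W v)" for v
    using Kfun_eq[OF meas] unfolding A_def G_def W_def Kc_def e1_def e2_def e3_def by blast
  have Hf: "P v \<Longrightarrow> Hfun \<alpha> \<gamma> p a b v = Kc * ((e1 - e2) / (2 * e1)) * G v + ((e3 - e1) / ((p+1) * e1)) * W v" for v
  proof -
    assume Pv: "P v"
    have "Hfun \<alpha> \<gamma> p a b v = (A v + Kc * G v)/2 - 1/(p+1) * W v - 1/e1 * ((e1 * A v + Kc * (e2 * G v))/2 - 1/(p+1) * (e3 * W v))"
      unfolding Hfun_def act Kf[OF Pv] e1_def ..
    also have "\<dots> = Kc * ((e1 - e2) / (2 * e1)) * G v + ((e3 - e1) / ((p+1) * e1)) * W v"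
    proof -
      have "e1 \<noteq> 0" "p + 1 \<noteq> 0" using e1 p1' by auto
      thus ?thesis by (simp add: divide_simps) (simp add: algebra_simps)
    qed
    finally show ?thesis .
  qed
  have Hnn: "P v \<Longrightarrow> Hfun \<alpha> \<gamma> p a b v \<ge> 0" for v
    using Hf[of v] Kc e12 e1 e31 p1' Wnn[of v] Gnn[of v]
    by (simp add: add_nonneg_nonneg mult_nonneg_nonneg divide_nonneg_nonneg)
  have HS: "P v \<Longrightarrow> Kfun \<alpha> \<gamma> p a b v = 0 \<Longrightarrow> Hfun \<alpha> \<gamma> p a b v = action \<alpha> \<gamma> p v" for v
    unfolding Hfun_def by simp
  have key: "\<exists>v. P v \<and> Kfun \<alpha> \<gamma> p a b v = 0 \<and> action \<alpha> \<gamma> p v \<le> Hfun \<alpha> \<gamma> p a b u"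
    if Pu: "P u" and Ku: "Kfun \<alpha> \<gamma> p a b u \<le> 0" for u
  proof (cases "Kfun \<alpha> \<gamma> p a b u = 0")
    case True thus ?thesis using Pu HS by (intro exI[of _ u]) auto
  next
    case False
    hence Kneg: "Kfun \<alpha> \<gamma> p a b u < 0" using Ku by simp
    have um: "u \<in> borel_measurable lborel" using meas[OF Pu] .
    define g where "g t = (e1 * (t powr e1 * A u) + Kc * (e2 * (t powr e2 * G u)))/2 - 1/(p+1) * (e3 * (t powr e3 * W u))" for t :: real
    have Pt: "P (rescale a b t u)" if "t > 0" for t
      using P_rescale[of \<alpha> u t a b] Pu that by (simp add: P_def)
    have At: "A (rescale a b t u) = t powr e1 * A u" if "t > 0" for t
      unfolding A_def L2_rescale[OF um that] e1_def by (simp add: enn2real_mult)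
    have Gt: "G (rescale a b t u) = t powr e2 * G u" if "t > 0" for t
      unfolding G_def G_rescale[OF um that] e2_def by (simp add: enn2real_mult)
    have Wt: "W (rescale a b t u) = t powr e3 * W u" if "t > 0" for t
      unfolding W_def W_rescale[OF um that] e3_def ..
    have Kt: "Kfun \<alpha> \<gamma> p a b (rescale a b t u) = g t" if "t > 0" for t
      unfolding Kf[OF Pt[OF that]] At[OF that] Gt[OF that] Wt[OF that] g_def ..
    have g1: "g 1 < 0" using Kt[of 1] Kneg Kf[OF Pu] unfolding g_def by simp
    define d where "d = e3 - e1"
    have d: "d > 0" using e31 by (simp add: d_def)
    have Au: "A u > 0" using Apos[OF Pu] .
    define \<delta> where "\<delta> = e1 * A u * (p+1) / (2 * (e3 * W u + 1))"
    have e3: "e3 > 0" using e1 e31 by simp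
    have den: "e3 * W u + 1 > 0" using e3 Wnn[of u] by (simp add: add_nonneg_pos)
    have \<delta>: "\<delta> > 0" unfolding \<delta>_def using e1 Au p1' den by simp
    define t0 where "t0 = min 1 (\<delta> powr (1/d))"
    have t0: "t0 > 0" "t0 \<le> 1" using \<delta> by (auto simp: t0_def)
    have "t0 powr d \<le> (\<delta> powr (1/d)) powr d"
      using t0 d by (intro powr_mono2) (auto simp: t0_def)
    also have "\<dots> = \<delta>" using d \<delta> by (simp add: powr_powr)
    finally have t0d: "t0 powr d \<le> \<delta>" .
    have "e3 * W u * t0 powr d / (p+1) \<le> e3 * W u * \<delta> / (p+1)"
      using t0d e3 Wnn[of u] p1' by (intro divide_right_mono mult_left_mono) auto
    also have "\<dots> = e1 * A u / 2 * (e3 * W u / (e3 * W u + 1))"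
    proof -
      have "e3 * W u + 1 \<noteq> 0" "p + 1 \<noteq> 0" using den p1' by auto
      thus ?thesis unfolding \<delta>_def by (simp add: divide_simps)
    qed
    also have "\<dots> < e1 * A u / 2"
    proof -
      have "e3 * W u / (e3 * W u + 1) < 1" using den by simp
      moreover have "e1 * A u / 2 > 0" using e1 Au by simp
      ultimately show ?thesis using mult_strict_left_mono by (metis mult_1_right)
    qed
    finally have small: "e3 * W u * t0 powr d / (p+1) < e1 * A u / 2" .
    have g0: "g t0 \<ge> 0"
    proof -
      have "t0 powr e3 = t0 powr e1 * t0 powr d" unfolding d_def by (simp add: powr_add[symmetric])
      hence "g t0 = t0 powr e1 * (e1 * A u / 2 - e3 * W u * t0 powr d / (p+1)) + Kc * e2 * t0 powr e2 * G u / 2"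
        unfolding g_def by (simp add: field_simps)
      moreover have "t0 powr e1 * (e1 * A u / 2 - e3 * W u * t0 powr d / (p+1)) \<ge> 0"
        using small by simp
      moreover have "Kc * e2 * t0 powr e2 * G u / 2 \<ge> 0"
        using Kc e2 Gnn[of u] by simp
      ultimately show ?thesis by linarith
    qed
    have cont: "\<forall>x. t0 \<le> x \<and> x \<le> 1 \<longrightarrow> isCont g x"
      using t0 p1' unfolding g_def by (auto intro!: continuous_intros)
    obtain t where t: "t0 \<le> t" "t \<le> 1" "g t = 0"
      using IVT2[of g 1 0 t0] g1 g0 t0 cont by auto
    have tp: "t > 0" using t t0 by simp
    define v where "v = rescale a b t u"
    have Pv: "P v" unfolding v_def using Pt[OF tp] .
    have Kv: "Kfun \<alpha> \<gamma> p a b v = 0" unfolding v_def using Kt[OF tp] t by simp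
    have "action \<alpha> \<gamma> p v = Hfun \<alpha> \<gamma> p a b v" using HS[OF Pv Kv] by simp
    also have "\<dots> = Kc * ((e1 - e2) / (2 * e1)) * (t powr e2 * G u) + ((e3 - e1) / ((p+1) * e1)) * (t powr e3 * W u)"
      using Hf[OF Pv] Gt[OF tp] Wt[OF tp] unfolding v_def by simp
    also have "\<dots> \<le> Kc * ((e1 - e2) / (2 * e1)) * G u + ((e3 - e1) / ((p+1) * e1)) * W u"
    proof (intro add_mono mult_left_mono)
      have "t powr e2 \<le> 1" using t tp e2 by (intro powr_le1) auto
      thus "t powr e2 * G u \<le> G u" using Gnn[of u] by (simp add: mult_left_le_one_le)
      have "t powr e3 \<le> 1" using t tp e3 by (intro powr_le1) auto
      thus "t powr e3 * W u \<le> W u" using Wnn[of u] by (simp add: mult_left_le_one_le)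
      show "0 \<le> Kc * ((e1 - e2) / (2 * e1))" using Kc e12 e1 by simp
      show "0 \<le> (e3 - e1) / ((p+1) * e1)" using e31 p1' e1 by simp
    qed
    also have "\<dots> = Hfun \<alpha> \<gamma> p a b u" using Hf[OF Pu] ..
    finally show ?thesis using Pv Kv by blast
  qed
  define S1 where "S1 = {action \<alpha> \<gamma> p u | u :: 'a \<Rightarrow> complex. in_H_rd \<alpha> u \<and> nonzero u \<and> Kfun \<alpha> \<gamma> p a b u = 0}"
  define S2 where "S2 = {Hfun \<alpha> \<gamma> p a b u | u :: 'a \<Rightarrow> complex. in_H_rd \<alpha> u \<and> nonzero u \<and> Kfun \<alpha> \<gamma> p a b u \<le> 0}"
  have sub: "S1 \<subseteq> S2"
  proof
    fix x assume "x \<in> S1"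
    then obtain u :: "'a \<Rightarrow> complex" where u: "x = action \<alpha> \<gamma> p u" "in_H_rd \<alpha> u" "nonzero u" "Kfun \<alpha> \<gamma> p a b u = 0"
      unfolding S1_def by auto
    hence "x = Hfun \<alpha> \<gamma> p a b u" using HS[of u] by (simp add: P_def)
    thus "x \<in> S2" unfolding S2_def using u by auto
  qed
  have bdd2: "bdd_below S2"
    unfolding S2_def using Hnn by (intro bdd_belowI[of _ 0]) (auto simp: P_def)
  have bdd1: "bdd_below S1" using bdd_below_mono[OF bdd2 sub] .
  have dom: "\<exists>x\<in>S1. x \<le> y" if "y \<in> S2" for y
  proof -
    from that obtain u where u: "y = Hfun \<alpha> \<gamma> p a b u" "P u" "Kfun \<alpha> \<gamma> p a b u \<le> 0"
      unfolding S2_def P_def by blast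
    from key[OF u(2) u(3)] obtain v where "P v" "Kfun \<alpha> \<gamma> p a b v = 0" "action \<alpha> \<gamma> p v \<le> y"
      using u by blast
    thus ?thesis unfolding S1_def P_def by blast
  qed
  have "Inf S1 = Inf S2"
  proof (cases "S2 = {}")
    case True
    hence "S1 = {}" using sub by blast
    thus ?thesis using True by simp
  next
    case False
    hence ne1: "S1 \<noteq> {}" using dom by blast
    show ?thesis
    proof (rule antisym)
      show "Inf S1 \<le> Inf S2"
      proof (rule cInf_greatest[OF False])
        fix y assume "y \<in> S2"
        then obtain x where "x \<in> S1" "x \<le> y" using dom by blast
        thus "Inf S1 \<le> y" using cInf_lower[OF _ bdd1] by (meson order_trans)
      qed
      show "Inf S2 \<le> Inf S1"
        by (rule cInf_superset_mono[OF ne1 bdd2 sub])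
    qed
  qed
  thus ?thesis unfolding m_ab_def S1_def S2_def .
qed

end
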